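(* Let $\mathfrak g$ be a Lie algebra over a field $\mathbb k$ and $(X,\Delta,T)$ the associated TSD object obtained by composing the binary SD operation. For a Lie $2$-cochain $\phi$ define $\Theta^2(\phi)\colon X^{\otimes 3}\to X$ by $\Theta^2(\phi)((a,x)\otimes(b,y)\otimes(c,z))=\big(0,\ b\phi(x,z)+c\phi(x,y)+[\phi(x,y),z]+\phi([x,y],z)\big).$ Then $\Theta^2$ maps $Z^2_{\rm Lie}(\mathfrak g;\mathfrak g)$ into $Z^2_{\rm TSD}(X;X)$ and $B^2_{\rm Lie}(\mathfrak g;\mathfrak g)$ into $B^2_{\rm TSD}(X;X)$, and thus induces a homomorphism $H^2_{\rm Lie}(\mathfrak g;\mathfrak g)\to H^2_{\rm TSD}(X;X)$.
   Context: $X=\mathbb k\oplus\mathfrak g$, $\Delta(a,x)=(a,x)\otimes(1,0)+(1,0)\otimes(0,x)$, $\Delta_3=(\Delta\otimes\mathbb 1)\Delta$ (Sweedler $\Delta_3(w)=w^{(1)}\otimes w^{(2)}\otimes w^{(3)}$), $q((a,x)\otimes(b,y))=(ab,bx+[x,y])$, and $T=q\circ(q\otimes\mathbb 1)$, i.e. $T((a,x)\otimes(b,y)\otimes(c,z))=(abc,\ bcx+c[x,y]+b[x,z]+[[x,y],z])$. TSD cohomology: $\sigma\colon X^{\otimes 9}\to X^{\otimes 9}$ sends $u_1\otimes\cdots\otimes u_9$ to $u_1\otimes u_4\otimes u_7\otimes u_2\otimes u_5\otimes u_8\otimes u_3\otimes u_6\otimes u_9$. $C^1_{\rm TSD}$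 = linear $f$ with $\Delta_3 f=(f\otimes\mathbb 1\otimes\mathbb 1+\mathbb 1\otimes f\otimes\mathbb 1+\mathbb 1\otimes\mathbb 1\otimes f)\Delta_3$; $C^2_{\rm TSD}$ = linear $\psi\colon X^{\otimes 3}\to X$ with $\Delta_3\psi=(\psi\otimes T\otimes T+T\otimes\psi\otimes T+T\otimes T\otimes\psi)\sigma\Delta_3^{\otimes3}$; $\delta^1 f(x\otimes y\otimes z)=f(T(x\otimes y\otimes z))-T(f(x)\otimes y\otimes z)-T(x\otimes f(y)\otimes z)-T(x\otimes y\otimes f(z))$; $\delta^2\psi(x\otimes y\otimes z\otimes w\otimes u)=T(\psi(x\otimes y\otimes z)\otimes w\otimes u)+\psi(T(x\otimes y\otimes z)\otimes w\otimes u)-\psi(A_1\otimes A_2\otimes A_3)-T(\Psi_1\otimes A_2\otimes A_3)-T(A_1\otimes\Psi_2\otimes A_3)-T(A_1\otimes A_2\otimes\Psi_3)$, where $A_i=T(x_i\otimes w^{(i)}\otimes u^{(i)})$, $(x_1,x_2,x_3)=(x,y,z)$, $\Psi_i$ likewise with $\psi$; $Z^2_{\rm TSD}=C^2_{\rm TSD}\cap\ker\delta^2$, $B^2_{\rm TSD}=\delta^1(C^1_{\rm TSD})$, $H^2_{\rm TSD}=Z^2/B^2$. Lie cohomology: $2$-cochains are alternating bilinear $\phi\colon\mathfrak g\times\mathfrak g\to\mathfrak g$; $\delta^2\phi(x,y,z)=[\phi(x,y),z]+[\phi(y,z),x]+[\phi(z,x),y]+\phi([x,y],z)+\phi([y,z],x)+\phi([z,x],y)$;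 $\delta^1f(x,y)=f([x,y])-[f(x),y]-[x,f(y)]$; $H^2_{\rm Lie}=\ker\delta^2/\operatorname{im}\delta^1$. *)

theory Defs
  imports Complex_Main "HOL-Library.Product_Plus"
begin

text \<open>The TSD object is
  X = k (+) g, modelled as the product type 'k * 'g (componentwise addition from
  Product_Plus), with scalar multiplication Xsc.\<close>

definition Xsc :: "('k::field \<Rightarrow> 'g::ab_group_add \<Rightarrow> 'g) \<Rightarrow> 'k \<Rightarrow> 'k \<times> 'g \<Rightarrow> 'k \<times> 'g" where
  "Xsc scale c u = (c * fst u, scale c (snd u))"

definition g_lin :: "('k::field \<Rightarrow> 'g::ab_group_add \<Rightarrow> 'g) \<Rightarrow> ('g \<Rightarrow> 'g) \<Rightarrow> bool" where
  "g_lin scale f \<longleftrightarrow> (\<forall>x y. f (x + y) = f x + f y) \<and> (\<forall>c x. f (scale c x) = scale c (f x))"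

definition g_bilin :: "('k::field \<Rightarrow> 'g::ab_group_add \<Rightarrow> 'g) \<Rightarrow> ('g \<Rightarrow> 'g \<Rightarrow> 'g) \<Rightarrow> bool" where
  "g_bilin scale b \<longleftrightarrow> (\<forall>y. g_lin scale (\<lambda>x. b x y)) \<and> (\<forall>x. g_lin scale (\<lambda>y. b x y))"

definition lie_algebra :: "('k::field \<Rightarrow> 'g::ab_group_add \<Rightarrow> 'g) \<Rightarrow> ('g \<Rightarrow> 'g \<Rightarrow> 'g) \<Rightarrow> bool" where
  "lie_algebra scale br \<longleftrightarrow> vector_space scale \<and> g_bilin scale br \<and> (\<forall>x. br x x = 0)
     \<and> (\<forall>x y z. br x (br y z) + br y (br z x) + br z (br x y) = 0)"

definition C2_Lie :: "('k::field \<Rightarrow> 'g::ab_group_add \<Rightarrow> 'g) \<Rightarrow> ('g \<Rightarrow> 'g \<Rightarrow> 'g) \<Rightarrow> bool" where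
  "C2_Lie scale \<phi> \<longleftrightarrow> g_bilin scale \<phi> \<and> (\<forall>x. \<phi> x x = 0)"

definition lie_delta2 :: "('g::ab_group_add \<Rightarrow> 'g \<Rightarrow> 'g) \<Rightarrow> ('g \<Rightarrow> 'g \<Rightarrow> 'g) \<Rightarrow> 'g \<Rightarrow> 'g \<Rightarrow> 'g \<Rightarrow> 'g" where
  "lie_delta2 br \<phi> x y z = br (\<phi> x y) z + br (\<phi> y z) x + br (\<phi> z x) y
     + \<phi> (br x y) z + \<phi> (br y z) x + \<phi> (br z x) y"

definition lie_delta1 :: "('g::ab_group_add \<Rightarrow> 'g \<Rightarrow> 'g) \<Rightarrow> ('g \<Rightarrow> 'g) \<Rightarrow> 'g \<Rightarrow> 'g \<Rightarrow> 'g" where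
  "lie_delta1 br f x y = f (br x y) - br (f x) y - br x (f y)"

definition Z2_Lie :: "('k::field \<Rightarrow> 'g::ab_group_add \<Rightarrow> 'g) \<Rightarrow> ('g \<Rightarrow> 'g \<Rightarrow> 'g) \<Rightarrow> ('g \<Rightarrow> 'g \<Rightarrow> 'g) set" where
  "Z2_Lie scale br = {\<phi>. C2_Lie scale \<phi> \<and> (\<forall>x y z. lie_delta2 br \<phi> x y z = 0)}"

definition B2_Lie :: "('k::field \<Rightarrow> 'g::ab_group_add \<Rightarrow> 'g) \<Rightarrow> ('g \<Rightarrow> 'g \<Rightarrow> 'g) \<Rightarrow> ('g \<Rightarrow> 'g \<Rightarrow> 'g) set" where
  "B2_Lie scale br = {\<phi>. \<exists>f. g_lin scale f \<and> \<phi> = lie_delta1 br f}"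

definition Xlin :: "('k::field \<Rightarrow> 'g::ab_group_add \<Rightarrow> 'g) \<Rightarrow> ('k \<times> 'g \<Rightarrow> 'k \<times> 'g) \<Rightarrow> bool" where
  "Xlin scale f \<longleftrightarrow> (\<forall>u v. f (u + v) = f u + f v) \<and> (\<forall>c u. f (Xsc scale c u) = Xsc scale c (f u))"

text \<open>A linear map X (x) X (x) X \<rightarrow> X is represented by the trilinear map it induces.\<close>
definition Xtrilin :: "('k::field \<Rightarrow> 'g::ab_group_add \<Rightarrow> 'g) \<Rightarrow> ('k \<times> 'g \<Rightarrow> 'k \<times> 'g \<Rightarrow> 'k \<times> 'g \<Rightarrow> 'k \<times> 'g) \<Rightarrow> bool" where
  "Xtrilin scale \<psi> \<longleftrightarrow> (\<forall>v w. Xlin scale (\<lambda>u. \<psi> u v w)) \<and> (\<forall>u w. Xlin scale (\<lambda>v. \<psi> u v w))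
     \<and> (\<forall>u v. Xlin scale (\<lambda>w. \<psi> u v w))"

definition qop :: "('k::field \<Rightarrow> 'g::ab_group_add \<Rightarrow> 'g) \<Rightarrow> ('g \<Rightarrow> 'g \<Rightarrow> 'g) \<Rightarrow> 'k \<times> 'g \<Rightarrow> 'k \<times> 'g \<Rightarrow> 'k \<times> 'g" where
  "qop scale br u v = (fst u * fst v, scale (fst v) (snd u) + br (snd u) (snd v))"

definition Top :: "('k::field \<Rightarrow> 'g::ab_group_add \<Rightarrow> 'g) \<Rightarrow> ('g \<Rightarrow> 'g \<Rightarrow> 'g) \<Rightarrow> 'k \<times> 'g \<Rightarrow> 'k \<times> 'g \<Rightarrow> 'k \<times> 'g \<Rightarrow> 'k \<times> 'g" where
  "Top scale br u v w = qop scale br (qop scale br u v) w"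

text \<open>Elements of X (x) X and X (x) X (x) X given as formal sums of pure tensors
  (lists of coefficient, factors).  Delta(a,x) = (a,x)(x)(1,0) + (1,0)(x)(0,x),
  Delta3 = (Delta (x) 1) Delta.\<close>
definition Delta :: "'k::field \<times> 'g::ab_group_add \<Rightarrow> ('k \<times> ('k \<times> 'g) \<times> ('k \<times> 'g)) list" where
  "Delta w = [(1, w, (1, 0)), (1, (1, 0), (0, snd w))]"

definition Delta3 :: "'k::field \<times> 'g::ab_group_add \<Rightarrow> ('k \<times> ('k \<times> 'g) \<times> ('k \<times> 'g) \<times> ('k \<times> 'g)) list" where
  "Delta3 w = concat (map (\<lambda>(c, v, r). map (\<lambda>(c', p, q). (c * c', p, q, r)) (Delta v)) (Delta w))"

text \<open>Free vector space on triples: finitely supported functions. A formal sum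
  is sent to its element of the free vector space; the tensor product is the
  quotient by the span of the multilinearity relations.\<close>
definition fsum3 :: "('k::field \<times> 'x \<times> 'x \<times> 'x) list \<Rightarrow> ('x \<times> 'x \<times> 'x \<Rightarrow> 'k)" where
  "fsum3 l t = sum_list (map fst (filter (\<lambda>e. snd e = t) l))"

definition dl3 :: "'x \<times> 'x \<times> 'x \<Rightarrow> ('x \<times> 'x \<times> 'x \<Rightarrow> 'k::field)" where
  "dl3 t = (\<lambda>s. if s = t then 1 else 0)"

definition gens3 :: "('k::field \<Rightarrow> 'g::ab_group_add \<Rightarrow> 'g) \<Rightarrow> (('k \<times> 'g) \<times> ('k \<times> 'g) \<times> ('k \<times> 'g) \<Rightarrow> 'k) set" where
  "gens3 scale =
     {(\<lambda>s. dl3 (u + v, y, z) s - dl3 (u, y, z) s - dl3 (v, y, z) s) | u v y z. True}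
   \<union> {(\<lambda>s. dl3 (x, u + v, z) s - dl3 (x, u, z) s - dl3 (x, v, z) s) | x u v z. True}
   \<union> {(\<lambda>s. dl3 (x, y, u + v) s - dl3 (x, y, u) s - dl3 (x, y, v) s) | x y u v. True}
   \<union> {(\<lambda>s. dl3 (Xsc scale c u, y, z) s - c * dl3 (u, y, z) s) | c u y z. True}
   \<union> {(\<lambda>s. dl3 (x, Xsc scale c u, z) s - c * dl3 (x, u, z) s) | c x u z. True}
   \<union> {(\<lambda>s. dl3 (x, y, Xsc scale c u) s - c * dl3 (x, y, u) s) | c x y u. True}"

inductive tz3 :: "('k::field \<Rightarrow> 'g::ab_group_add \<Rightarrow> 'g) \<Rightarrow> (('k \<times> 'g) \<times> ('k \<times> 'g) \<times> ('k \<times> 'g) \<Rightarrow> 'k) \<Rightarrow> bool"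
  for scale where
  tz3_zero: "tz3 scale (\<lambda>_. 0)"
| tz3_gen: "f \<in> gens3 scale \<Longrightarrow> tz3 scale f"
| tz3_add: "tz3 scale f \<Longrightarrow> tz3 scale g \<Longrightarrow> tz3 scale (\<lambda>s. f s + g s)"
| tz3_smult: "tz3 scale f \<Longrightarrow> tz3 scale (\<lambda>s. c * f s)"

definition tensor3_eq :: "('k::field \<Rightarrow> 'g::ab_group_add \<Rightarrow> 'g)
   \<Rightarrow> ('k \<times> ('k \<times> 'g) \<times> ('k \<times> 'g) \<times> ('k \<times> 'g)) list
   \<Rightarrow> ('k \<times> ('k \<times> 'g) \<times> ('k \<times> 'g) \<times> ('k \<times> 'g)) list \<Rightarrow> bool" where
  "tensor3_eq scale l1 l2 \<longleftrightarrow> tz3 scale (\<lambda>s. fsum3 l1 s - fsum3 l2 s)"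

definition C1_TSD :: "('k::field \<Rightarrow> 'g::ab_group_add \<Rightarrow> 'g) \<Rightarrow> ('k \<times> 'g \<Rightarrow> 'k \<times> 'g) set" where
  "C1_TSD scale = {f. Xlin scale f \<and> (\<forall>w. tensor3_eq scale (Delta3 (f w))
      (concat (map (\<lambda>(c, p, q, r). [(c, f p, q, r), (c, p, f q, r), (c, p, q, f r)]) (Delta3 w))))}"

text \<open>Delta3^{(x)3}(x (x) y (x) z) as a formal sum of pure 9-tensors (lists of length 9).\<close>
definition Delta3_pow3 :: "'k::field \<times> 'g::ab_group_add \<Rightarrow> 'k \<times> 'g \<Rightarrow> 'k \<times> 'g \<Rightarrow> ('k \<times> ('k \<times> 'g) list) list" where
  "Delta3_pow3 x y z = [(c * d * e, [x1, x2, x3, y1, y2, y3, z1, z2, z3]).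
      (c, x1, x2, x3) \<leftarrow> Delta3 x, (d, y1, y2, y3) \<leftarrow> Delta3 y, (e, z1, z2, z3) \<leftarrow> Delta3 z]"

definition sigma9 :: "'a list \<Rightarrow> 'a list" where
  "sigma9 us = map ((!) us) [0, 3, 6, 1, 4, 7, 2, 5, 8]"

definition tapp3 :: "('x \<Rightarrow> 'x \<Rightarrow> 'x \<Rightarrow> 'x) \<Rightarrow> ('x \<Rightarrow> 'x \<Rightarrow> 'x \<Rightarrow> 'x) \<Rightarrow> ('x \<Rightarrow> 'x \<Rightarrow> 'x \<Rightarrow> 'x) \<Rightarrow> 'x list \<Rightarrow> 'x \<times> 'x \<times> 'x" where
  "tapp3 F G H us = (F (us!0) (us!1) (us!2), G (us!3) (us!4) (us!5), H (us!6) (us!7) (us!8))"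

definition C2_TSD :: "('k::field \<Rightarrow> 'g::ab_group_add \<Rightarrow> 'g) \<Rightarrow> ('g \<Rightarrow> 'g \<Rightarrow> 'g)
    \<Rightarrow> ('k \<times> 'g \<Rightarrow> 'k \<times> 'g \<Rightarrow> 'k \<times> 'g \<Rightarrow> 'k \<times> 'g) set" where
  "C2_TSD scale br = {\<psi>. Xtrilin scale \<psi> \<and> (\<forall>x y z. tensor3_eq scale (Delta3 (\<psi> x y z))
      (concat (map (\<lambda>(c, us). let vs = sigma9 us; T = Top scale br in
          [(c, tapp3 \<psi> T T vs), (c, tapp3 T \<psi> T vs), (c, tapp3 T T \<psi> vs)])
        (Delta3_pow3 x y z))))}"

definition tsd_delta1 :: "('k::field \<Rightarrow> 'g::ab_group_add \<Rightarrow> 'g) \<Rightarrow> ('g \<Rightarrow> 'g \<Rightarrow> 'g)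
    \<Rightarrow> ('k \<times> 'g \<Rightarrow> 'k \<times> 'g) \<Rightarrow> 'k \<times> 'g \<Rightarrow> 'k \<times> 'g \<Rightarrow> 'k \<times> 'g \<Rightarrow> 'k \<times> 'g" where
  "tsd_delta1 scale br f x y z = (let T = Top scale br in
     f (T x y z) - T (f x) y z - T x (f y) z - T x y (f z))"

text \<open>delta^2 psi on a pure 5-tensor; Sweedler sums over Delta3 w and Delta3 u.\<close>
definition tsd_delta2 :: "('k::field \<Rightarrow> 'g::ab_group_add \<Rightarrow> 'g) \<Rightarrow> ('g \<Rightarrow> 'g \<Rightarrow> 'g)
    \<Rightarrow> ('k \<times> 'g \<Rightarrow> 'k \<times> 'g \<Rightarrow> 'k \<times> 'g \<Rightarrow> 'k \<times> 'g)
    \<Rightarrow> 'k \<times> 'g \<Rightarrow> 'k \<times> 'g \<Rightarrow> 'k \<times> 'g \<Rightarrow> 'k \<times> 'g \<Rightarrow> 'k \<times> 'g \<Rightarrow> 'k \<times> 'g" where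
  "tsd_delta2 scale br \<psi> x y z w u = (let T = Top scale br in
     T (\<psi> x y z) w u + \<psi> (T x y z) w u
     - sum_list [Xsc scale (c * d)
          (let A1 = T x w1 u1; A2 = T y w2 u2; A3 = T z w3 u3 in
             \<psi> A1 A2 A3 + T (\<psi> x w1 u1) A2 A3 + T A1 (\<psi> y w2 u2) A3 + T A1 A2 (\<psi> z w3 u3)).
        (c, w1, w2, w3) \<leftarrow> Delta3 w, (d, u1, u2, u3) \<leftarrow> Delta3 u])"

definition Z2_TSD :: "('k::field \<Rightarrow> 'g::ab_group_add \<Rightarrow> 'g) \<Rightarrow> ('g \<Rightarrow> 'g \<Rightarrow> 'g)
    \<Rightarrow> ('k \<times> 'g \<Rightarrow> 'k \<times> 'g \<Rightarrow> 'k \<times> 'g \<Rightarrow> 'k \<times> 'g) set" where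
  "Z2_TSD scale br = {\<psi>. \<psi> \<in> C2_TSD scale br \<and> (\<forall>x y z w u. tsd_delta2 scale br \<psi> x y z w u = 0)}"

definition B2_TSD :: "('k::field \<Rightarrow> 'g::ab_group_add \<Rightarrow> 'g) \<Rightarrow> ('g \<Rightarrow> 'g \<Rightarrow> 'g)
    \<Rightarrow> ('k \<times> 'g \<Rightarrow> 'k \<times> 'g \<Rightarrow> 'k \<times> 'g \<Rightarrow> 'k \<times> 'g) set" where
  "B2_TSD scale br = tsd_delta1 scale br ` C1_TSD scale"

definition Theta2 :: "('k::field \<Rightarrow> 'g::ab_group_add \<Rightarrow> 'g) \<Rightarrow> ('g \<Rightarrow> 'g \<Rightarrow> 'g) \<Rightarrow> ('g \<Rightarrow> 'g \<Rightarrow> 'g)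
    \<Rightarrow> 'k \<times> 'g \<Rightarrow> 'k \<times> 'g \<Rightarrow> 'k \<times> 'g \<Rightarrow> 'k \<times> 'g" where
  "Theta2 scale br \<phi> u v w = (0,
     scale (fst v) (\<phi> (snd u) (snd w)) + scale (fst w) (\<phi> (snd u) (snd v))
     + br (\<phi> (snd u) (snd v)) (snd w) + \<phi> (br (snd u) (snd v)) (snd w))"

end

theory Submission
  imports Defs
begin

lemma g_linD:
  assumes "g_lin scale f" "vector_space scale"
  shows "f (x + y) = f x + f y" "f (scale c x) = scale c (f x)" "f 0 = 0" "f (- x) = - f x"
    "f (x - y) = f x - f y"
proof -
  interpret additive f using assms(1) by unfold_locales (simp add: g_lin_def)
  show "f (x + y) = f x + f y" "f 0 = 0" "f (- x) = - f x" "f (x - y) = f x - f y"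
    by (simp_all add: add diff minus zero)
  show "f (scale c x) = scale c (f x)" using assms(1) by (simp add: g_lin_def)
qed

lemma g_bilinD:
  assumes "g_bilin scale b" "vector_space scale"
  shows "b (x + y) z = b x z + b y z" "b (scale c x) z = scale c (b x z)" "b 0 z = 0" "b (- x) z = - b x z"
    "b (x - y) z = b x z - b y z"
    "b z (x + y) = b z x + b z y" "b z (scale c x) = scale c (b z x)" "b z 0 = 0" "b z (- x) = - b z x"
    "b z (x - y) = b z x - b z y"
  using g_linD[of scale "\<lambda>x. b x z", OF _ assms(2)] g_linD[of scale "\<lambda>x. b z x", OF _ assms(2)] assms(1)
  by (auto simp: g_bilin_def)

lemma tz3_smult': "tz3 scale f \<Longrightarrow> tz3 scale (\<lambda>s. c * f s)" by (rule tz3_smult)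
lemma tz3_neg: "tz3 scale f \<Longrightarrow> tz3 scale (\<lambda>s. - f s)"
  using tz3_smult[of scale f "-1"] by simp
lemma tz3_addh: "tz3 scale h \<Longrightarrow> tz3 scale (\<lambda>s. D s + h s) = tz3 scale D"
proof
  assume h: "tz3 scale h" and "tz3 scale (\<lambda>s. D s + h s)"
  from tz3_add[OF this(2) tz3_neg[OF h]] show "tz3 scale D" by simp
next
  assume "tz3 scale h" "tz3 scale D" thus "tz3 scale (\<lambda>s. D s + h s)" by (rule tz3_add[rotated])
qed
lemma tz3_cong: "(\<And>s. f s = g s) \<Longrightarrow> tz3 scale f = tz3 scale g"
  by (metis ext)

lemma fsum3_Nil[simp]: "fsum3 [] s = 0" by (simp add: fsum3_def)
lemma fsum3_Cons: "fsum3 (t # l) s = c_of t s + fsum3 l s" if "c_of = (\<lambda>t s. if snd t = s then fst t else 0)"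
  using that by (simp add: fsum3_def)
lemma fsum3_Cons': "fsum3 (t # l) s = (if snd t = s then fst t else 0) + fsum3 l s"
  by (simp add: fsum3_def)
lemma fsum3_append: "fsum3 (l @ m) s = fsum3 l s + fsum3 m s"
  by (simp add: fsum3_def)

lemma teq_fsum_cong: "(\<And>s. fsum3 l s = fsum3 l' s) \<Longrightarrow> (\<And>s. fsum3 m s = fsum3 m' s)
   \<Longrightarrow> tensor3_eq scale l m = tensor3_eq scale l' m'"
  unfolding tensor3_eq_def by (rule tz3_cong) simp
lemma teq_refl: "tensor3_eq scale l l" unfolding tensor3_eq_def using tz3_zero by simp
lemma teq_sym: "tensor3_eq scale l m \<Longrightarrow> tensor3_eq scale m l"
  unfolding tensor3_eq_def by (drule tz3_neg) simp
lemma teq_trans[trans]: "tensor3_eq scale l m \<Longrightarrow> tensor3_eq scale m n \<Longrightarrow> tensor3_eq scale l n"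
  unfolding tensor3_eq_def by (drule (1) tz3_add) simp
lemma teq_app: "tensor3_eq scale l m \<Longrightarrow> tensor3_eq scale l' m' \<Longrightarrow> tensor3_eq scale (l @ l') (m @ m')"
  unfolding tensor3_eq_def by (drule (1) tz3_add) (simp add: fsum3_append algebra_simps)
lemma teq_Cons: "tensor3_eq scale [t] [t'] \<Longrightarrow> tensor3_eq scale l m \<Longrightarrow> tensor3_eq scale (t # l) (t' # m)"
  using teq_app[of scale "[t]" "[t']" l m] by simp

lemma tz3_genI: "f \<in> gens3 scale \<Longrightarrow> tz3 scale f" by (rule tz3_gen)

lemma gensI:
  "(\<lambda>s. dl3 (u + v, y, z) s - dl3 (u, y, z) s - dl3 (v, y, z) s) \<in> gens3 scale"
  "(\<lambda>s. dl3 (x, u + v, z) s - dl3 (x, u, z) s - dl3 (x, v, z) s) \<in> gens3 scale"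
  "(\<lambda>s. dl3 (x, y, u + v) s - dl3 (x, y, u) s - dl3 (x, y, v) s) \<in> gens3 scale"
  "(\<lambda>s. dl3 (Xsc scale c u, y, z) s - c * dl3 (u, y, z) s) \<in> gens3 scale"
  "(\<lambda>s. dl3 (x, Xsc scale c u, z) s - c * dl3 (x, u, z) s) \<in> gens3 scale"
  "(\<lambda>s. dl3 (x, y, Xsc scale c u) s - c * dl3 (x, y, u) s) \<in> gens3 scale"
  unfolding gens3_def
  apply (rule UnI1, rule UnI1, rule UnI1, rule UnI1, rule UnI1, rule CollectI, (rule exI)+, rule conjI[OF refl TrueI])
  apply (rule UnI1, rule UnI1, rule UnI1, rule UnI1, rule UnI2, rule CollectI, (rule exI)+, rule conjI[OF refl TrueI])
  apply (rule UnI1, rule UnI1, rule UnI1, rule UnI2, rule CollectI, (rule exI)+, rule conjI[OF refl TrueI])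
  apply (rule UnI1, rule UnI1, rule UnI2, rule CollectI, (rule exI)+, rule conjI[OF refl TrueI])
  apply (rule UnI1, rule UnI2, rule CollectI, (rule exI)+, rule conjI[OF refl TrueI])
  apply (rule UnI2, rule CollectI, (rule exI)+, rule conjI[OF refl TrueI])
  done

lemma zero_terms:
  shows "tz3 (scale :: 'k::field \<Rightarrow> 'g::ab_group_add \<Rightarrow> 'g) (\<lambda>s. c * dl3 ((0::'k,0::'g),q,r) s)" "tz3 scale (\<lambda>s. c * dl3 (p,((0::'k,0::'g)),r) s)"
    "tz3 scale (\<lambda>s. c * dl3 (p,q,((0::'k,0::'g))) s)"
proof -
  have "tz3 scale (\<lambda>s. dl3 ((0,0)+(0,0),q,r) s - dl3 ((0,0),q,r) s - dl3 ((0::'k,0::'g),q,r) s)"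
    by (rule tz3_gen, rule gensI)
  from tz3_smult[OF this, of "-c"] show "tz3 scale (\<lambda>s. c * dl3 ((0::'k,0::'g),q,r) s)" by (simp add: algebra_simps)
  have "tz3 scale (\<lambda>s. dl3 (p,(0,0)+(0,0),r) s - dl3 (p,(0,0),r) s - dl3 (p,(0::'k,0::'g),r) s)"
    by (rule tz3_gen, rule gensI)
  from tz3_smult[OF this, of "-c"] show "tz3 scale (\<lambda>s. c * dl3 (p,(0::'k,0::'g),r) s)" by (simp add: algebra_simps)
  have "tz3 scale (\<lambda>s. dl3 (p,q,(0,0)+(0,0)) s - dl3 (p,q,(0,0)) s - dl3 (p,q,(0::'k,0::'g)) s)"
    by (rule tz3_gen, rule gensI)
  from tz3_smult[OF this, of "-c"] show "tz3 scale (\<lambda>s. c * dl3 (p,q,(0::'k,0::'g)) s)" by (simp add: algebra_simps)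
qed

lemma cdl3: "(if t = s then c else 0) = c * dl3 t s" by (simp add: dl3_def)

lemma drop_zero_term:
  assumes "tz3 scale (\<lambda>s. c * dl3 t s)"
  shows "tensor3_eq scale ((c,t) # l) m = tensor3_eq scale l m"
    "tensor3_eq scale l ((c,t) # m) = tensor3_eq scale l m"
proof -
  show "tensor3_eq scale ((c,t) # l) m = tensor3_eq scale l m"
    unfolding tensor3_eq_def fsum3_Cons' using tz3_addh[OF assms, of "\<lambda>s. fsum3 l s - fsum3 m s"]
    by (simp add: cdl3 algebra_simps)
  show "tensor3_eq scale l ((c,t) # m) = tensor3_eq scale l m"
    unfolding tensor3_eq_def fsum3_Cons' using tz3_addh[OF tz3_neg[OF assms], of "\<lambda>s. fsum3 l s - fsum3 m s"]
    by (simp add: cdl3 algebra_simps)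
qed

lemmas drop_zero = drop_zero_term[OF zero_terms(1)] drop_zero_term[OF zero_terms(2)] drop_zero_term[OF zero_terms(3)]

lemma drop_zero_coef:
  "tensor3_eq scale ((0,t) # l) m = tensor3_eq scale l m"
  "tensor3_eq scale l ((0,t) # m) = tensor3_eq scale l m"
  by (rule drop_zero_term, simp add: tz3_zero)+


definition dropL where "dropL scale acc l m = tensor3_eq scale (acc @ l) m"
definition dropR where "dropR scale l acc m = tensor3_eq scale l (acc @ m)"

lemma fsum3_swap: "fsum3 ((t # acc) @ l) s = fsum3 (acc @ t # l) s"
  by (simp add: fsum3_append fsum3_Cons' algebra_simps)

lemma dropL_start: "tensor3_eq scale l m = dropL scale [] l m" by (simp add: dropL_def)
lemma dropL_move: "NO_MATCH ((0,0),q,r) t \<Longrightarrow> NO_MATCH (p,(0,0),r) t \<Longrightarrow> NO_MATCH (p,q,(0,0)) t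
   \<Longrightarrow> NO_MATCH 0 c \<Longrightarrow> dropL scale acc ((c,t) # l) m = dropL scale ((c,t) # acc) l m"
  unfolding dropL_def by (rule teq_fsum_cong) (simp_all add: fsum3_append fsum3_Cons' algebra_simps)
lemma dropL_end: "dropL scale acc [] m = dropR scale acc [] m" by (simp add: dropL_def dropR_def)
lemma dropR_move: "NO_MATCH ((0,0),q,r) t \<Longrightarrow> NO_MATCH (p,(0,0),r) t \<Longrightarrow> NO_MATCH (p,q,(0,0)) t
   \<Longrightarrow> NO_MATCH 0 c \<Longrightarrow> dropR scale l acc ((c,t) # m) = dropR scale l ((c,t) # acc) m"
  unfolding dropR_def by (rule teq_fsum_cong) (simp_all add: fsum3_append fsum3_Cons' algebra_simps)
lemma dropR_end: "dropR scale l acc [] = tensor3_eq scale l acc" by (simp add: dropR_def)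

lemma dropL_zero:
  "dropL scale acc ((c,(0,0),q,r) # l) m = dropL scale acc l m"
  "dropL scale acc ((c,p,(0,0),r) # l) m = dropL scale acc l m"
  "dropL scale acc ((c,p,q,(0,0)) # l) m = dropL scale acc l m"
  "dropL scale acc ((0,t) # l) m = dropL scale acc l m"
  unfolding dropL_def
  by (rule teq_fsum_cong[THEN trans], rule fsum3_swap[symmetric], rule refl,
      simp add: drop_zero drop_zero_coef)+
lemma dropR_zero:
  "dropR scale l acc ((c,(0,0),q,r) # m) = dropR scale l acc m"
  "dropR scale l acc ((c,p,(0,0),r) # m) = dropR scale l acc m"
  "dropR scale l acc ((c,p,q,(0,0)) # m) = dropR scale l acc m"
  "dropR scale l acc ((0,t) # m) = dropR scale l acc m"
  unfolding dropR_def
  by (rule teq_fsum_cong[THEN trans], rule refl, rule fsum3_swap[symmetric],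
      simp add: drop_zero drop_zero_coef)+

lemmas dropsimps = dropL_move dropL_end dropR_move dropR_end dropL_zero dropR_zero

locale LA =
  fixes scale :: "'k::field \<Rightarrow> 'g::ab_group_add \<Rightarrow> 'g" and br :: "'g \<Rightarrow> 'g \<Rightarrow> 'g"
  assumes LA: "lie_algebra scale br"
begin
lemma vs: "vector_space scale" using LA by (simp add: lie_algebra_def)
sublocale vector_space scale by (rule vs)
lemma bil: "g_bilin scale br" using LA by (simp add: lie_algebra_def)
lemmas br_rules[simp] = g_bilinD[OF bil vs]
lemma br_self[simp]: "br x x = 0" using LA by (simp add: lie_algebra_def)
lemma jacobi: "br x (br y z) + br y (br z x) + br z (br x y) = 0" using LA by (simp add: lie_algebra_def)
lemma br_anti: "br y x = - br x y"
proof -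
  have "br x y + br y x = br (x+y) (x+y)" by (simp only: br_rules(1,6)) simp
  then have "br x y + br y x = 0" by simp
  then show ?thesis by (metis neg_eq_iff_add_eq_0)
qed

lemma fsum_single: "fsum3 [(c,t)] s = c * dl3 t s" by (simp add: fsum3_Cons' dl3_def)
lemma fsum_two: "fsum3 [(c,t),(c',t')] s = c * dl3 t s + c' * dl3 t' s" by (simp add: fsum3_Cons' dl3_def)

lemma M1: "tensor3_eq scale [(c,(k,0),q,r)] [(c*k,(1,0),q,r)]"
proof -
  have "tz3 scale (\<lambda>s. c * (dl3 (Xsc scale k (1,0), q, r) s - k * dl3 ((1,0), q, r) s))"
    by (rule tz3_smult, rule tz3_gen, rule gensI)
  then show ?thesis unfolding tensor3_eq_def fsum_single by (simp add: Xsc_def algebra_simps)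
qed
lemma M2: "tensor3_eq scale [(c*k,p,(0,u),r)] [(c,p,(0,scale k u),r)]"
proof -
  have "tz3 scale (\<lambda>s. (-c) * (dl3 (p, Xsc scale k (0,u), r) s - k * dl3 (p,(0,u), r) s))"
    by (rule tz3_smult, rule tz3_gen, rule gensI)
  then show ?thesis unfolding tensor3_eq_def fsum_single by (simp add: Xsc_def algebra_simps)
qed
lemma M2': "tensor3_eq scale [(c*k,p,r,(0,u))] [(c,p,r,(0,scale k u))]"
proof -
  have "tz3 scale (\<lambda>s. (-c) * (dl3 (p, r, Xsc scale k (0,u)) s - k * dl3 (p,r,(0,u)) s))"
    by (rule tz3_smult, rule tz3_gen, rule gensI)
  then show ?thesis unfolding tensor3_eq_def fsum_single by (simp add: Xsc_def algebra_simps)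
qed
lemma M3: "tensor3_eq scale [(c,p,(0,u),r),(c,p,(0,v),r)] [(c,p,(0,u+v),r)]"
proof -
  have "tz3 scale (\<lambda>s. (-c) * (dl3 (p, (0,u)+(0,v), r) s - dl3 (p,(0,u), r) s - dl3 (p,(0,v), r) s))"
    by (rule tz3_smult, rule tz3_gen, rule gensI)
  then show ?thesis unfolding tensor3_eq_def fsum_single fsum_two by (simp add: algebra_simps)
qed
lemma M3': "tensor3_eq scale [(c,p,r,(0,u)),(c,p,r,(0,v))] [(c,p,r,(0,u+v))]"
proof -
  have "tz3 scale (\<lambda>s. (-c) * (dl3 (p, r, (0,u)+(0,v)) s - dl3 (p,r,(0,u)) s - dl3 (p,r,(0,v)) s))"
    by (rule tz3_smult, rule tz3_gen, rule gensI)
  then show ?thesis unfolding tensor3_eq_def fsum_single fsum_two by (simp add: algebra_simps)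
qed
end

locale LT = LA +
  fixes phi
  assumes C2: "C2_Lie scale phi"
begin
lemma phibil: "g_bilin scale phi" using C2 by (simp add: C2_Lie_def)
lemmas phi_rules[simp] = g_bilinD[OF phibil vs]
lemma phi_self[simp]: "phi x x = 0" using C2 by (simp add: C2_Lie_def)

lemma comult: "tensor3_eq scale (Delta3 (Theta2 scale br phi x y z))
      (concat (map (\<lambda>(c, us). let vs = sigma9 us; T = Top scale br in
          [(c, tapp3 (Theta2 scale br phi) T T vs), (c, tapp3 T (Theta2 scale br phi) T vs), (c, tapp3 T T (Theta2 scale br phi) vs)])
        (Delta3_pow3 x y z)))"
proof -
  let ?o = "(1::'a, 0::'b)"
  let ?u1 = "scale (fst y) (phi (snd x) (snd z))"
  let ?u2 = "scale (fst z) (phi (snd x) (snd y))"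
  let ?u3 = "br (phi (snd x) (snd y)) (snd z) + phi (br (snd x) (snd y)) (snd z)"
  let ?V = "?u1 + ?u2 + ?u3"
  have B1: "tensor3_eq scale [(1,(fst y,0),(0,phi (snd x) (snd z)),?o)] [(1,?o,(0,?u1),?o)]"
    by (rule teq_trans[OF M1[of 1, simplified] M2[of 1, simplified]])
  have B2: "tensor3_eq scale [(1,(fst z,0),(0,phi (snd x) (snd y)),?o)] [(1,?o,(0,?u2),?o)]"
    by (rule teq_trans[OF M1[of 1, simplified] M2[of 1, simplified]])
  have C1: "tensor3_eq scale [(1,(fst y,0),?o,(0,phi (snd x) (snd z)))] [(1,?o,?o,(0,?u1))]"
    by (rule teq_trans[OF M1[of 1, simplified] M2'[of 1, simplified]])
  have C2: "tensor3_eq scale [(1,(fst z,0),?o,(0,phi (snd x) (snd y)))] [(1,?o,?o,(0,?u2))]"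
    by (rule teq_trans[OF M1[of 1, simplified] M2'[of 1, simplified]])
  have B: "tensor3_eq scale [(1,(fst y,0),(0,phi (snd x) (snd z)),?o), (1,(fst z,0),(0,phi (snd x) (snd y)),?o),
       (1,?o,(0,?u3),?o)] [(1,?o,(0,?V),?o)]"
  proof -
    have "tensor3_eq scale [(1,(fst y,0),(0,phi (snd x) (snd z)),?o), (1,(fst z,0),(0,phi (snd x) (snd y)),?o),
       (1,?o,(0,?u3),?o)] [(1,?o,(0,?u1),?o), (1,?o,(0,?u2),?o), (1,?o,(0,?u3),?o)]"
      by (rule teq_Cons[OF B1], rule teq_Cons[OF B2], rule teq_refl)
    also have "tensor3_eq scale [(1,?o,(0,?u1),?o), (1,?o,(0,?u2),?o), (1,?o,(0,?u3),?o)]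
        [(1,?o,(0,?u1+?u2),?o), (1,?o,(0,?u3),?o)]"
      by (rule teq_app[OF M3 teq_refl, simplified])
    also have "tensor3_eq scale [(1,?o,(0,?u1+?u2),?o), (1,?o,(0,?u3),?o)] [(1,?o,(0,?V),?o)]"
      by (rule M3)
    finally show ?thesis .
  qed
  have C: "tensor3_eq scale [(1,(fst y,0),?o,(0,phi (snd x) (snd z))), (1,(fst z,0),?o,(0,phi (snd x) (snd y))),
       (1,?o,?o,(0,?u3))] [(1,?o,?o,(0,?V))]"
  proof -
    have "tensor3_eq scale [(1,(fst y,0),?o,(0,phi (snd x) (snd z))), (1,(fst z,0),?o,(0,phi (snd x) (snd y))),
       (1,?o,?o,(0,?u3))] [(1,?o,?o,(0,?u1)), (1,?o,?o,(0,?u2)), (1,?o,?o,(0,?u3))]"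
      by (rule teq_Cons[OF C1], rule teq_Cons[OF C2], rule teq_refl)
    also have "tensor3_eq scale [(1,?o,?o,(0,?u1)), (1,?o,?o,(0,?u2)), (1,?o,?o,(0,?u3))]
        [(1,?o,?o,(0,?u1+?u2)), (1,?o,?o,(0,?u3))]"
      by (rule teq_app[OF M3' teq_refl, simplified])
    also have "tensor3_eq scale [(1,?o,?o,(0,?u1+?u2)), (1,?o,?o,(0,?u3))] [(1,?o,?o,(0,?V))]"
      by (rule M3')
    finally show ?thesis .
  qed
  have ALL: "tensor3_eq scale ([(1,(0,?V),?o,?o)] @ [(1,(fst y,0),(0,phi (snd x) (snd z)),?o), (1,(fst z,0),(0,phi (snd x) (snd y)),?o),
       (1,?o,(0,?u3),?o)] @ [(1,(fst y,0),?o,(0,phi (snd x) (snd z))), (1,(fst z,0),?o,(0,phi (snd x) (snd y))),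
       (1,?o,?o,(0,?u3))]) ([(1,(0,?V),?o,?o)] @ [(1,?o,(0,?V),?o)] @ [(1,?o,?o,(0,?V))])"
    by (rule teq_app[OF teq_refl teq_app[OF B C]])
  show ?thesis
    apply (subst dropL_start)
    apply (simp add: Delta3_def Delta_def Delta3_pow3_def sigma9_def tapp3_def Top_def qop_def Theta2_def dropsimps)
    apply (rule teq_sym)
    apply (rule iffD1[OF teq_fsum_cong ALL])
     apply (simp_all add: fsum3_Cons' fsum3_append add_ac)
    done
qed

lemma trilin: "Xtrilin scale (Theta2 scale br phi)"
  unfolding Xtrilin_def Xlin_def Theta2_def Xsc_def
  by (simp add: scale_left_distrib scale_right_distrib scale_left_commute add_ac mult_ac)

lemma inC2: "Theta2 scale br phi \<in> C2_TSD scale br"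
  unfolding C2_TSD_def using trilin comult by simp
end

lemma (in LA) theta_lin:
  "Theta2 scale br (\<lambda>x y. f x y + g x y) = (\<lambda>u v w. Theta2 scale br f u v w + Theta2 scale br g u v w)"
  "Theta2 scale br (\<lambda>x y. scale c (f x y)) = (\<lambda>u v w. Xsc scale c (Theta2 scale br f u v w))"
  by (auto intro!: ext simp: Theta2_def Xsc_def scale_right_distrib scale_left_commute add_ac mult_ac)


lemma teq_of_fsum: "(\<And>s. fsum3 l s = fsum3 m s) \<Longrightarrow> tensor3_eq scale l m"
  unfolding tensor3_eq_def by (simp add: tz3_zero)

context LA begin
lemma B2part:
  assumes f: "g_lin scale f"
  shows "Theta2 scale br (lie_delta1 br f) \<in> B2_TSD scale br"
proof -
  note fr[simp] = g_linD[OF f vs]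
  let ?F = "\<lambda>w::'k\<times>'g. (0::'k, f (snd w))"
  have lin: "Xlin scale ?F" unfolding Xlin_def Xsc_def by simp
  have cm: "tensor3_eq scale (Delta3 (?F w))
      (concat (map (\<lambda>(c, p, q, r). [(c, ?F p, q, r), (c, p, ?F q, r), (c, p, q, ?F r)]) (Delta3 w)))" for w
    apply (subst dropL_start)
    apply (simp add: Delta3_def Delta_def dropsimps)
    apply (rule teq_of_fsum)
    apply (simp add: fsum3_Cons' add_ac)
    done
  have C1: "?F \<in> C1_TSD scale" unfolding C1_TSD_def using lin cm by blast
  have eq: "tsd_delta1 scale br ?F = Theta2 scale br (lie_delta1 br f)"
    by (auto intro!: ext simp: tsd_delta1_def Top_def qop_def Theta2_def lie_delta1_def
        scale_right_distrib scale_right_diff_distrib algebra_simps)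
  show ?thesis unfolding B2_TSD_def using C1 eq by (metis image_eqI)
qed
end


definition jacx :: "('g \<Rightarrow> 'g \<Rightarrow> 'g) \<Rightarrow> 'g \<Rightarrow> 'g \<Rightarrow> 'g \<Rightarrow> 'g::ab_group_add" where
  "jacx br s t r = br s (br t r) + br t (br r s) + br r (br s t)"

context LT begin
lemma phi_anti: "phi y x = - phi x y"
proof -
  have "phi x y + phi y x = phi (x+y) (x+y)" by (simp only: phi_rules(1,6)) simp
  then have "phi x y + phi y x = 0" by simp
  then show ?thesis by (metis neg_eq_iff_add_eq_0)
qed
lemma jac0: "jacx br s t r = 0" unfolding jacx_def by (rule jacobi)
end

locale LZ = LT +
  assumes cocy: "lie_delta2 br phi x y z = 0"
begin

lemma d2snd: "snd (tsd_delta2 scale br (Theta2 scale br phi) (a,x) (b,y) (c,z) (d,p) (e,q)) = 0"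
proof -
  have AS: "br x p = - br p x"
    "br x q = - br q x"
    "br y p = - br p y"
    "br y q = - br q y"
    "br z p = - br p z"
    "br z q = - br q z"
    "br (br p x) q = - br q (br p x)"
    "br (br p x) y = - br y (br p x)"
    "br (br p y) q = - br q (br p y)"
    "br (br p z) q = - br q (br p z)"
    "br (br p z) x = - br x (br p z)"
    "br (br p (br x y)) q = - br q (br p (br x y))"
    "br (br p (br z (phi x y))) q = - br q (br p (br z (phi x y)))"
    "br (br p (phi x y)) q = - br q (br p (phi x y))"
    "br (br p (phi x y)) z = - br z (br p (phi x y))"
    "br (br p (phi x z)) q = - br q (br p (phi x z))"
    "br (br p (phi z (br x y))) q = - br q (br p (phi z (br x y)))"
    "br (br q x) y = - br y (br q x)"
    "br (br q x) (br p y) = - br (br p y) (br q x)"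
    "br (br q y) x = - br x (br q y)"
    "br (br q (br p x)) y = - br y (br q (br p x))"
    "br (br q (br p z)) x = - br x (br q (br p z))"
    "br (br q (br p (phi x y))) z = - br z (br q (br p (phi x y)))"
    "br (br q (br x (phi p y))) z = - br z (br q (br x (phi p y)))"
    "br (br q (br x (phi p z))) y = - br y (br q (br x (phi p z)))"
    "br (br q (br y (phi p x))) z = - br z (br q (br y (phi p x)))"
    "br (br q (br y (phi p z))) x = - br x (br q (br y (phi p z)))"
    "br (br q (phi p x)) y = - br y (br q (phi p x))"
    "br (br q (phi p x)) z = - br z (br q (phi p x))"
    "br (br q (phi p z)) x = - br x (br q (phi p z))"
    "br (br q (phi p (br x y))) z = - br z (br q (phi p (br x y)))"
    "br (br q (phi x y)) z = - br z (br q (phi x y))"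
    "br (br q (phi x (br p y))) z = - br z (br q (phi x (br p y)))"
    "br (br q (phi x (br p z))) y = - br y (br q (phi x (br p z)))"
    "br (br q (phi y (br p x))) z = - br z (br q (phi y (br p x)))"
    "br (br q (phi y (br p z))) x = - br x (br q (phi y (br p z)))"
    "br (br x y) p = - br p (br x y)"
    "br (br x y) z = - br z (br x y)"
    "br (br x y) (br p z) = - br (br p z) (br x y)"
    "br (br x y) (br q (phi p z)) = - br (br q (phi p z)) (br x y)"
    "br (br x z) p = - br p (br x z)"
    "br (br x (br p y)) q = - br q (br x (br p y))"
    "br (br x (br p z)) q = - br q (br x (br p z))"
    "br (br x (br q (phi p y))) z = - br z (br x (br q (phi p y)))"
    "br (br x (br q (phi p z))) y = - br y (br x (br q (phi p z)))"
    "br (br x (br y (phi p z))) q = - br q (br x (br y (phi p z)))"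
    "br (br x (phi p y)) q = - br q (br x (phi p y))"
    "br (br x (phi p y)) z = - br z (br x (phi p y))"
    "br (br x (phi p y)) (br q z) = - br (br q z) (br x (phi p y))"
    "br (br x (phi p z)) q = - br q (br x (phi p z))"
    "br (br x (phi p z)) (br q y) = - br (br q y) (br x (phi p z))"
    "br (br x (phi q y)) z = - br z (br x (phi q y))"
    "br (br x (phi q y)) (br p z) = - br (br p z) (br x (phi q y))"
    "br (br x (phi q (br p y))) z = - br z (br x (phi q (br p y)))"
    "br (br x (phi q (br p z))) y = - br y (br x (phi q (br p z)))"
    "br (br x (phi y (br p z))) q = - br q (br x (phi y (br p z)))"
    "br (br y (br p x)) q = - br q (br y (br p x))"
    "br (br y (br p z)) q = - br q (br y (br p z))"
    "br (br y (br q (phi p x))) z = - br z (br y (br q (phi p x)))"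
    "br (br y (br q (phi p z))) x = - br x (br y (br q (phi p z)))"
    "br (br y (br x (phi p z))) q = - br q (br y (br x (phi p z)))"
    "br (br y (phi p x)) q = - br q (br y (phi p x))"
    "br (br y (phi p x)) z = - br z (br y (phi p x))"
    "br (br y (phi p x)) (br q z) = - br (br q z) (br y (phi p x))"
    "br (br y (phi p z)) q = - br q (br y (phi p z))"
    "br (br y (phi p z)) (br q x) = - br (br q x) (br y (phi p z))"
    "br (br y (phi q x)) z = - br z (br y (phi q x))"
    "br (br y (phi q x)) (br p z) = - br (br p z) (br y (phi q x))"
    "br (br y (phi q (br p x))) z = - br z (br y (phi q (br p x)))"
    "br (br y (phi q (br p z))) x = - br x (br y (phi q (br p z)))"
    "br (br y (phi x (br p z))) q = - br q (br y (phi x (br p z)))"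
    "br (br z (br p (phi x y))) q = - br q (br z (br p (phi x y)))"
    "br (br z (br x y)) p = - br p (br z (br x y))"
    "br (br z (phi p x)) q = - br q (br z (phi p x))"
    "br (br z (phi p (br x y))) q = - br q (br z (phi p (br x y)))"
    "br (br z (phi x y)) p = - br p (br z (phi x y))"
    "br (br z (phi x y)) q = - br q (br z (phi x y))"
    "br (br (br p x) (phi q y)) z = - br z (br (br p x) (phi q y))"
    "br (br (br p y) (phi q x)) z = - br z (br (br p y) (phi q x))"
    "br (br (br p z) (phi q x)) y = - br y (br (br p z) (phi q x))"
    "br (br (br p z) (phi q y)) x = - br x (br (br p z) (phi q y))"
    "br (br (br p z) (phi x y)) q = - br q (br (br p z) (phi x y))"
    "br (br (br q x) (phi p y)) z = - br z (br (br q x) (phi p y))"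
    "br (br (br q x) (phi p z)) y = - br y (br (br q x) (phi p z))"
    "br (br (br q y) (phi p x)) z = - br z (br (br q y) (phi p x))"
    "br (br (br q y) (phi p z)) x = - br x (br (br q y) (phi p z))"
    "br (br (br x y) (phi p z)) q = - br q (br (br x y) (phi p z))"
    "br (phi p x) q = - br q (phi p x)"
    "br (phi p x) y = - br y (phi p x)"
    "br (phi p x) z = - br z (phi p x)"
    "br (phi p x) (br q y) = - br (br q y) (phi p x)"
    "br (phi p x) (br q z) = - br (br q z) (phi p x)"
    "br (phi p y) q = - br q (phi p y)"
    "br (phi p y) x = - br x (phi p y)"
    "br (phi p y) (br q x) = - br (br q x) (phi p y)"
    "br (phi p z) q = - br q (phi p z)"
    "br (phi p z) x = - br x (phi p z)"
    "br (phi p z) (br q x) = - br (br q x) (phi p z)"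
    "br (phi p z) (br q y) = - br (br q y) (phi p z)"
    "br (phi p z) (br x y) = - br (br x y) (phi p z)"
    "br (phi p z) (br x (br q y)) = - br (br x (br q y)) (phi p z)"
    "br (phi p z) (br y (br q x)) = - br (br y (br q x)) (phi p z)"
    "br (phi p (br x y)) q = - br q (phi p (br x y))"
    "br (phi p (br x y)) z = - br z (phi p (br x y))"
    "br (phi p (br x y)) (br q z) = - br (br q z) (phi p (br x y))"
    "br (phi p (br x z)) q = - br q (phi p (br x z))"
    "br (phi p (br z (br x y))) q = - br q (phi p (br z (br x y)))"
    "br (phi q x) y = - br y (phi q x)"
    "br (phi q x) z = - br z (phi q x)"
    "br (phi q x) (br p y) = - br (br p y) (phi q x)"
    "br (phi q x) (br p z) = - br (br p z) (phi q x)"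
    "br (phi q x) (br y (br p z)) = - br (br y (br p z)) (phi q x)"
    "br (phi q y) x = - br x (phi q y)"
    "br (phi q y) (br p x) = - br (br p x) (phi q y)"
    "br (phi q y) (br p z) = - br (br p z) (phi q y)"
    "br (phi q y) (br x (br p z)) = - br (br x (br p z)) (phi q y)"
    "br (phi q z) x = - br x (phi q z)"
    "br (phi q z) (br p x) = - br (br p x) (phi q z)"
    "br (phi q z) (br p (br x y)) = - br (br p (br x y)) (phi q z)"
    "br (phi q z) (br x y) = - br (br x y) (phi q z)"
    "br (phi q (br p x)) y = - br y (phi q (br p x))"
    "br (phi q (br p x)) z = - br z (phi q (br p x))"
    "br (phi q (br p y)) x = - br x (phi q (br p y))"
    "br (phi q (br p z)) x = - br x (phi q (br p z))"
    "br (phi q (br p z)) y = - br y (phi q (br p z))"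
    "br (phi q (br p z)) (br x y) = - br (br x y) (phi q (br p z))"
    "br (phi q (br p (br x y))) z = - br z (phi q (br p (br x y)))"
    "br (phi q (br x y)) z = - br z (phi q (br x y))"
    "br (phi q (br x (br p y))) z = - br z (phi q (br x (br p y)))"
    "br (phi q (br x (br p z))) y = - br y (phi q (br x (br p z)))"
    "br (phi q (br y (br p x))) z = - br z (phi q (br y (br p x)))"
    "br (phi q (br y (br p z))) x = - br x (phi q (br y (br p z)))"
    "br (phi x y) p = - br p (phi x y)"
    "br (phi x y) q = - br q (phi x y)"
    "br (phi x y) z = - br z (phi x y)"
    "br (phi x y) (br p z) = - br (br p z) (phi x y)"
    "br (phi x y) (br q z) = - br (br q z) (phi x y)"
    "br (phi x y) (br q (br p z)) = - br (br q (br p z)) (phi x y)"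
    "br (phi x z) p = - br p (phi x z)"
    "br (phi x z) q = - br q (phi x z)"
    "br (phi x (br p y)) q = - br q (phi x (br p y))"
    "br (phi x (br p y)) z = - br z (phi x (br p y))"
    "br (phi x (br p y)) (br q z) = - br (br q z) (phi x (br p y))"
    "br (phi x (br p z)) q = - br q (phi x (br p z))"
    "br (phi x (br p z)) y = - br y (phi x (br p z))"
    "br (phi x (br p z)) (br q y) = - br (br q y) (phi x (br p z))"
    "br (phi x (br q y)) z = - br z (phi x (br q y))"
    "br (phi x (br q y)) (br p z) = - br (br p z) (phi x (br q y))"
    "br (phi x (br q (br p y))) z = - br z (phi x (br q (br p y)))"
    "br (phi x (br q (br p z))) y = - br y (phi x (br q (br p z)))"
    "br (phi x (br y (br p z))) q = - br q (phi x (br y (br p z)))"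
    "br (phi y (br p x)) q = - br q (phi y (br p x))"
    "br (phi y (br p x)) z = - br z (phi y (br p x))"
    "br (phi y (br p x)) (br q z) = - br (br q z) (phi y (br p x))"
    "br (phi y (br p z)) q = - br q (phi y (br p z))"
    "br (phi y (br p z)) x = - br x (phi y (br p z))"
    "br (phi y (br p z)) (br q x) = - br (br q x) (phi y (br p z))"
    "br (phi y (br q x)) z = - br z (phi y (br q x))"
    "br (phi y (br q x)) (br p z) = - br (br p z) (phi y (br q x))"
    "br (phi y (br q (br p x))) z = - br z (phi y (br q (br p x)))"
    "br (phi y (br q (br p z))) x = - br x (phi y (br q (br p z)))"
    "br (phi y (br x (br p z))) q = - br q (phi y (br x (br p z)))"
    "br (phi z (br p x)) q = - br q (phi z (br p x))"
    "br (phi z (br p (br x y))) q = - br q (phi z (br p (br x y)))"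
    "br (phi z (br x y)) p = - br p (phi z (br x y))"
    "br (phi z (br x y)) q = - br q (phi z (br x y))"
    "br (phi (br p x) (br q y)) z = - br z (phi (br p x) (br q y))"
    "br (phi (br p y) (br q x)) z = - br z (phi (br p y) (br q x))"
    "br (phi (br p z) (br q x)) y = - br y (phi (br p z) (br q x))"
    "br (phi (br p z) (br q y)) x = - br x (phi (br p z) (br q y))"
    "br (phi (br p z) (br x y)) q = - br q (phi (br p z) (br x y))"
    "phi x p = - phi p x"
    "phi x q = - phi q x"
    "phi y p = - phi p y"
    "phi y q = - phi q y"
    "phi z p = - phi p z"
    "phi z q = - phi q z"
    "phi (br p x) q = - phi q (br p x)"
    "phi (br p x) y = - phi y (br p x)"
    "phi (br p x) z = - phi z (br p x)"
    "phi (br p y) q = - phi q (br p y)"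
    "phi (br p y) x = - phi x (br p y)"
    "phi (br p z) q = - phi q (br p z)"
    "phi (br p z) x = - phi x (br p z)"
    "phi (br p (br x y)) q = - phi q (br p (br x y))"
    "phi (br p (br x y)) z = - phi z (br p (br x y))"
    "phi (br p (br x z)) q = - phi q (br p (br x z))"
    "phi (br p (br z (br x y))) q = - phi q (br p (br z (br x y)))"
    "phi (br q x) y = - phi y (br q x)"
    "phi (br q x) z = - phi z (br q x)"
    "phi (br q x) (br p y) = - phi (br p y) (br q x)"
    "phi (br q x) (br p z) = - phi (br p z) (br q x)"
    "phi (br q y) x = - phi x (br q y)"
    "phi (br q y) (br p x) = - phi (br p x) (br q y)"
    "phi (br q y) (br p z) = - phi (br p z) (br q y)"
    "phi (br q z) x = - phi x (br q z)"
    "phi (br q z) (br p x) = - phi (br p x) (br q z)"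
    "phi (br q z) (br p (br x y)) = - phi (br p (br x y)) (br q z)"
    "phi (br q (br p x)) y = - phi y (br q (br p x))"
    "phi (br q (br p x)) z = - phi z (br q (br p x))"
    "phi (br q (br p y)) x = - phi x (br q (br p y))"
    "phi (br q (br p z)) x = - phi x (br q (br p z))"
    "phi (br q (br p z)) y = - phi y (br q (br p z))"
    "phi (br q (br p (br x y))) z = - phi z (br q (br p (br x y)))"
    "phi (br q (br x y)) z = - phi z (br q (br x y))"
    "phi (br q (br x (br p y))) z = - phi z (br q (br x (br p y)))"
    "phi (br q (br x (br p z))) y = - phi y (br q (br x (br p z)))"
    "phi (br q (br y (br p x))) z = - phi z (br q (br y (br p x)))"
    "phi (br q (br y (br p z))) x = - phi x (br q (br y (br p z)))"
    "phi (br x y) p = - phi p (br x y)"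
    "phi (br x y) q = - phi q (br x y)"
    "phi (br x y) z = - phi z (br x y)"
    "phi (br x y) (br p z) = - phi (br p z) (br x y)"
    "phi (br x y) (br q z) = - phi (br q z) (br x y)"
    "phi (br x y) (br q (br p z)) = - phi (br q (br p z)) (br x y)"
    "phi (br x z) p = - phi p (br x z)"
    "phi (br x z) q = - phi q (br x z)"
    "phi (br x (br p y)) q = - phi q (br x (br p y))"
    "phi (br x (br p y)) z = - phi z (br x (br p y))"
    "phi (br x (br p y)) (br q z) = - phi (br q z) (br x (br p y))"
    "phi (br x (br p z)) q = - phi q (br x (br p z))"
    "phi (br x (br p z)) y = - phi y (br x (br p z))"
    "phi (br x (br p z)) (br q y) = - phi (br q y) (br x (br p z))"
    "phi (br x (br q y)) z = - phi z (br x (br q y))"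
    "phi (br x (br q y)) (br p z) = - phi (br p z) (br x (br q y))"
    "phi (br x (br q (br p y))) z = - phi z (br x (br q (br p y)))"
    "phi (br x (br q (br p z))) y = - phi y (br x (br q (br p z)))"
    "phi (br x (br y (br p z))) q = - phi q (br x (br y (br p z)))"
    "phi (br y (br p x)) q = - phi q (br y (br p x))"
    "phi (br y (br p x)) z = - phi z (br y (br p x))"
    "phi (br y (br p x)) (br q z) = - phi (br q z) (br y (br p x))"
    "phi (br y (br p z)) q = - phi q (br y (br p z))"
    "phi (br y (br p z)) x = - phi x (br y (br p z))"
    "phi (br y (br p z)) (br q x) = - phi (br q x) (br y (br p z))"
    "phi (br y (br q x)) z = - phi z (br y (br q x))"
    "phi (br y (br q x)) (br p z) = - phi (br p z) (br y (br q x))"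
    "phi (br y (br q (br p x))) z = - phi z (br y (br q (br p x)))"
    "phi (br y (br q (br p z))) x = - phi x (br y (br q (br p z)))"
    "phi (br y (br x (br p z))) q = - phi q (br y (br x (br p z)))"
    "phi (br z (br p x)) q = - phi q (br z (br p x))"
    "phi (br z (br p (br x y))) q = - phi q (br z (br p (br x y)))"
    "phi (br z (br x y)) p = - phi p (br z (br x y))"
    "phi (br z (br x y)) q = - phi q (br z (br x y))"
    "phi (br (br p x) (br q y)) z = - phi z (br (br p x) (br q y))"
    "phi (br (br p y) (br q x)) z = - phi z (br (br p y) (br q x))"
    "phi (br (br p z) (br q x)) y = - phi y (br (br p z) (br q x))"
    "phi (br (br p z) (br q y)) x = - phi x (br (br p z) (br q y))"
    "phi (br (br p z) (br x y)) q = - phi q (br (br p z) (br x y))"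
    by (rule br_anti phi_anti)+
  have E: "snd (tsd_delta2 scale br (Theta2 scale br phi) (a,x) (b,y) (c,z) (d,p) (e,q)) = 
    (- (br (jacx br p (phi x y) z) (q)) + (br (lie_delta2 br phi p (br x y) z) (q)) - (phi (jacx br p (br x y) z) (q)) + (jacx br (phi y (br p z)) q x) - (br (lie_delta2 br phi (br p z) x y) (q)) + (br (lie_delta2 br phi (br p z) q y) (x)) - (br (lie_delta2 br phi (br p z) q x) (y)) + (phi (jacx br (br p z) q x) (y)) - (phi (jacx br (br p z) q y) (x)) + (phi (jacx br (br p z) x y) (q)) - (jacx br (phi x (br p z)) q y) + (jacx br (br p z) (phi q x) y) - (lie_delta2 br phi (br p z) (br q x) y) + (lie_delta2 br phi (br x (br p z)) q y) - (lie_delta2 br phi (br y (br p z)) q x) + (jacx br (phi q (br p z)) x y) - (lie_delta2 br phi (br q (br p z)) x y) - (br (jacx br (phi p x) q y) (z)) + (br (jacx br (phi p y) q x) (z)) + (jacx br (br y (phi p z)) q x) + (br (jacx br (phi p z) x y) (q)) - (br (jacx br (phi p z) q y) (x)) + (br (jacx br (phi p z) q x) (y)) - (jacx br (br x (phi p z)) q y) + (jacx br (phi p z) (br q x) y) + (jacx br (br q (phi p z)) x y) + (lie_delta2 br phi (br p (br x y)) q z) - (br (phi (jacx br p x y) (q)) (z)) + (br (jacx br p x y) (phi (q) (z))) - (phi (br (jacx br p x y) (q)) (z)) + (phi (jacx br p x y) (br (q) (z))) + (phi (jacx br (br p y) q x) (z)) - (phi (jacx br (br p x) q y) (z)) - (jacx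 br (br p z) (phi q y) x) + (lie_delta2 br phi (br p z) (br q y) x) - (br (lie_delta2 br phi (br p y) q x) (z)) - (jacx br (phi p z) (br q y) x) - (jacx br (phi p (br x y)) q z) - (jacx br (br p (phi x y)) q z) - (br (lie_delta2 br phi p x y) (br (q) (z))) + (br (br (lie_delta2 br phi p x y) (q)) (z)) + (br (lie_delta2 br phi (br p x) q y) (z))) + scale (b) ((br (lie_delta2 br phi p x z) (q)) - (phi (jacx br p x z) (q)) - (jacx br (phi p x) q z) + (jacx br (phi p z) q x) + (lie_delta2 br phi (br p x) q z) - (lie_delta2 br phi (br p z) q x)) + scale (b*d) ((lie_delta2 br phi q x z)) + scale (b*e) ((lie_delta2 br phi p x z)) + scale (c) ((br (lie_delta2 br phi p x y) (q)) - (phi (jacx br p x y) (q)) - (jacx br (phi p x) q y) + (jacx br (phi p y) q x) + (lie_delta2 br phi (br p x) q y) - (lie_delta2 br phi (br p y) q x)) + scale (c*d) ((lie_delta2 br phi q x y)) + scale (c*e) ((lie_delta2 br phi p x y)) + scale (d) (- (jacx br q (phi x y) z) + (br (lie_delta2 br phi q x y) (z)) + (lie_delta2 br phi q (br x y) z) - (phi (jacx br q x y) (z))) + scale (e) (- (jacx br p (phi x y) z) + (br (lie_delta2 br phi p x y) (z)) + (lie_delta2 br phi p (br x y) z) - (phi (jacx br p x y) (z)))"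
    by (simp add: tsd_delta2_def Top_def qop_def Theta2_def Delta3_def Delta_def Xsc_def lie_delta2_def jacx_def AS mult_ac
      scale_right_distrib scale_right_diff_distrib)
  show ?thesis unfolding E by (simp add: cocy jac0)
qed
end


context LZ begin
lemma d2fst: "fst (tsd_delta2 scale br (Theta2 scale br phi) x y z w u) = 0"
  by (simp add: tsd_delta2_def Top_def qop_def Theta2_def Delta3_def Delta_def Xsc_def)
lemma d2: "tsd_delta2 scale br (Theta2 scale br phi) x y z w u = 0"
proof -
  have "snd (tsd_delta2 scale br (Theta2 scale br phi) x y z w u) = 0"
    using d2snd[of "fst x" "snd x" "fst y" "snd y" "fst z" "snd z" "fst w" "snd w" "fst u" "snd u"] by simp
  then show ?thesis using d2fst by (simp add: prod_eq_iff)
qed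
lemma inZ2: "Theta2 scale br phi \<in> Z2_TSD scale br"
  unfolding Z2_TSD_def using inC2 d2 by simp
end

theorem mainTheorem7:
  fixes scale :: "'k::field \<Rightarrow> 'g::ab_group_add \<Rightarrow> 'g"
    and br :: "'g \<Rightarrow> 'g \<Rightarrow> 'g"
  assumes "lie_algebra scale br"
  shows "(\<forall>\<phi> \<in> Z2_Lie scale br. Theta2 scale br \<phi> \<in> Z2_TSD scale br)
    \<and> (\<forall>\<phi> \<in> B2_Lie scale br. Theta2 scale br \<phi> \<in> B2_TSD scale br)
    \<and> (\<forall>\<phi> \<phi>' c. Theta2 scale br (\<lambda>x y. \<phi> x y + \<phi>' x y)
           = (\<lambda>u v w. Theta2 scale br \<phi> u v w + Theta2 scale br \<phi>' u v w)
        \<and> Theta2 scale br (\<lambda>x y. scale c (\<phi> x y)) = (\<lambda>u v w. Xsc scale c (Theta2 scale br \<phi> u v w)))"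
proof -
  interpret LA scale br by (rule LA.intro, rule assms)
  have Z: "Theta2 scale br \<phi> \<in> Z2_TSD scale br" if "\<phi> \<in> Z2_Lie scale br" for \<phi>
  proof -
    from that have "C2_Lie scale \<phi>" "\<And>x y z. lie_delta2 br \<phi> x y z = 0" by (auto simp: Z2_Lie_def)
    then interpret LZ scale br \<phi>
      by (intro LZ.intro LT.intro LT_axioms.intro LZ_axioms.intro LA_axioms) auto
    show ?thesis by (rule inZ2)
  qed
  have B: "Theta2 scale br \<phi> \<in> B2_TSD scale br" if "\<phi> \<in> B2_Lie scale br" for \<phi>
    using that B2part by (auto simp: B2_Lie_def)
  show ?thesis using Z B theta_lin by blast
qed

end
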